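(* Let $B \in M_m \otimes M_n$ (a real matrix, not necessarily symmetric). Then \[ \mu_{\min}(B) \ge W^{1+i}_{\min}(B) \quad\text{and}\quad \mu_{\max}(B) \le W^{1+i}_{\max}(B). \]
   Context: $M_n$ denotes real $n\times n$ matrices and $M_m\otimes M_n$ is identified with $M_{mn}$ via the Kronecker product. For $A = \sum_j X_j \otimes Y_j \in M_m\otimes M_n$, the partial transpose is the linear map $A^\Gamma = \sum_j X_j \otimes Y_j^T$. For $B \in M_m\otimes M_n$, $\mu_{\min}(B) = \min\{(\mathbf{v}\otimes\mathbf{w})^T B(\mathbf{v}\otimes\mathbf{w}) : \mathbf{v}\in\mathbb{R}^m,\mathbf{w}\in\mathbb{R}^n, \|\mathbf{v}\|=\|\mathbf{w}\|=1\}$ and $\mu_{\max}(B)$ is the corresponding maximum. The numerical range of a complex matrix $A\in M_N(\mathbb{C})$ is $W(A) = \{\mathbf{x}^*A\mathbf{x} : \mathbf{x}\in\mathbb{C}^N, \|\mathbf{x}\|=1\}$. Define $W^{1+i}(B) = \{c\in\mathbb{R} : c(1+i) \in W(B + iB^\Gamma)\}$; this is a nonempty compact interval, and $W^{1+i}_{\min}(B)$, $W^{1+i}_{\max}(B)$ denote its minimum and maximum. *)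

theory Defs
  imports "HOL-Analysis.Analysis"
begin

text \<open>Elements of M_m \<otimes> M_n are real matrices indexed by pairs (i,k), i in 'm, k in 'n,
  with the Kronecker convention (X \<otimes> Y)_((i,k),(j,l)) = X_ij * Y_kl.\<close>

type_synonym ('m, 'n) bimat = "real ^ ('m \<times> 'n) ^ ('m \<times> 'n)"

definition partial_transpose :: "('m::finite, 'n::finite) bimat \<Rightarrow> ('m, 'n) bimat" where
  "partial_transpose B = (\<chi> p q. B $ (fst p, snd q) $ (fst q, snd p))"

definition tensor_vec :: "real ^ 'm \<Rightarrow> real ^ 'n \<Rightarrow> real ^ ('m \<times> 'n)" where
  "tensor_vec v w = (\<chi> p. v $ fst p * w $ snd p)"

definition product_values :: "('m::finite, 'n::finite) bimat \<Rightarrow> real set" where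
  "product_values B = {tensor_vec v w \<bullet> (B *v tensor_vec v w) | v w.
      norm v = 1 \<and> norm w = 1}"

definition mu_min :: "('m::finite, 'n::finite) bimat \<Rightarrow> real" where
  "mu_min B = Inf (product_values B)"

definition mu_max :: "('m::finite, 'n::finite) bimat \<Rightarrow> real" where
  "mu_max B = Sup (product_values B)"

definition numerical_range :: "complex ^ 'N ^ 'N \<Rightarrow> complex set" where
  "numerical_range A = {(\<Sum>p\<in>UNIV. \<Sum>q\<in>UNIV. cnj (x $ p) * A $ p $ q * x $ q) | x.
      norm (x :: complex ^ 'N) = 1}"

definition W1i :: "('m::finite, 'n::finite) bimat \<Rightarrow> real set" where
  "W1i B = {c. complex_of_real c * (1 + \<i>) \<in>
     numerical_range (\<chi> p q. complex_of_real (B $ p $ q)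
                             + \<i> * complex_of_real (partial_transpose B $ p $ q))}"

definition W1i_min :: "('m::finite, 'n::finite) bimat \<Rightarrow> real" where
  "W1i_min B = Inf (W1i B)"

definition W1i_max :: "('m::finite, 'n::finite) bimat \<Rightarrow> real" where
  "W1i_max B = Sup (W1i B)"

end

theory Submission
  imports Defs
begin

lemma quad_form:
  fixes B :: "('m::finite, 'n::finite) bimat"
  shows "x \<bullet> (B *v x) = (\<Sum>p\<in>UNIV. \<Sum>q\<in>UNIV. x $ p * B $ p $ q * x $ q)"
  unfolding inner_vec_def matrix_vector_mult_def
  by (simp add: sum_distrib_left mult.assoc mult.left_commute)



lemma norm_tensor:
  "norm (tensor_vec (v::real^'m::finite) (w::real^'n::finite)) = norm v * norm w"
proof -
  have "tensor_vec v w \<bullet> tensor_vec v w = (\<Sum>p\<in>UNIV. (v $ fst p * w $ snd p) * (v $ fst p * w $ snd p))"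
    unfolding inner_vec_def tensor_vec_def by simp
  also have "\<dots> = (\<Sum>p\<in>UNIV\<times>UNIV. (v $ fst p * w $ snd p) * (v $ fst p * w $ snd p))"
    by (simp only: UNIV_Times_UNIV)
  also have "\<dots> = (\<Sum>a\<in>UNIV. \<Sum>b\<in>UNIV. (v $ a * w $ b) * (v $ a * w $ b))"
    by (simp only: sum.cartesian_product split_def)
  also have "\<dots> = (\<Sum>a\<in>UNIV. (v $ a * v $ a) * (\<Sum>b\<in>UNIV. w $ b * w $ b))"
    by (intro sum.cong refl, simp only: sum_distrib_left, intro sum.cong refl)
       (simp add: algebra_simps)
  also have "\<dots> = (v \<bullet> v) * (w \<bullet> w)"
    unfolding inner_vec_def by (simp add: sum_distrib_right)
  finally show ?thesis
    by (simp add: norm_eq_sqrt_inner real_sqrt_mult)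
qed

lemma aux: "(x::real)*z = u*w \<Longrightarrow> x*y*z = u*y*w"
proof -
  assume h: "x*z = u*w"
  have "x*y*z = (x*z)*y" "u*y*w = (u*w)*y" by (simp_all add: algebra_simps)
  then show ?thesis using h by simp
qed

lemma pt_same:
  fixes B :: "('m::finite, 'n::finite) bimat" and v :: "real^'m" and w :: "real^'n"
  defines "t \<equiv> tensor_vec v w"
  shows "(\<Sum>p\<in>UNIV. \<Sum>q\<in>UNIV. t $ p * partial_transpose B $ p $ q * t $ q)
       = (\<Sum>p\<in>UNIV. \<Sum>q\<in>UNIV. t $ p * B $ p $ q * t $ q)"
proof -
  let ?f = "\<lambda>pq::('m\<times>'n)\<times>('m\<times>'n). ((fst (fst pq), snd (snd pq)), (fst (snd pq), snd (fst pq)))"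
  have "(\<Sum>p\<in>UNIV. \<Sum>q\<in>UNIV. t $ p * partial_transpose B $ p $ q * t $ q)
      = (\<Sum>pq\<in>UNIV\<times>UNIV. t $ fst pq * partial_transpose B $ fst pq $ snd pq * t $ snd pq)"
    by (simp only: sum.cartesian_product split_def)
  also have "\<dots> = (\<Sum>pq\<in>UNIV\<times>UNIV. t $ fst pq * B $ fst pq $ snd pq * t $ snd pq)"
  proof (rule sum.reindex_bij_witness[where i = ?f and j = ?f])
    fix a :: "('m\<times>'n)\<times>('m\<times>'n)"
    show "?f (?f a) = a" by simp
    show "?f a \<in> UNIV \<times> UNIV" by simp
    show "?f (?f a) = a" by simp
    show "?f a \<in> UNIV \<times> UNIV" by simp
    have "t $ fst (?f a) * t $ snd (?f a) = t $ fst a * t $ snd a"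
      unfolding t_def tensor_vec_def by simp
    note X = this
    have Y: "partial_transpose B $ fst a $ snd a = B $ fst (?f a) $ snd (?f a)"
      unfolding partial_transpose_def by simp
    show "t $ fst (?f a) * B $ fst (?f a) $ snd (?f a) * t $ snd (?f a)
       = t $ fst a * partial_transpose B $ fst a $ snd a * t $ snd a"
      unfolding Y by (rule aux[OF X])
  qed
  also have "\<dots> = (\<Sum>p\<in>UNIV. \<Sum>q\<in>UNIV. t $ p * B $ p $ q * t $ q)"
    by (simp only: sum.cartesian_product split_def)
  finally show ?thesis .
qed

lemma norm_cvec:
  fixes x :: "real ^ 'N::finite"
  shows "norm ((\<chi> p. complex_of_real (x $ p)) :: complex ^ 'N) = norm x"
proof -
  have "((\<chi> p. complex_of_real (x $ p)) :: complex ^ 'N) \<bullet> (\<chi> p. complex_of_real (x $ p)) = x \<bullet> x"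
    unfolding inner_vec_def by (simp add: inner_complex_def)
  then show ?thesis by (simp add: norm_eq_sqrt_inner)
qed

lemma prod_sub:
  fixes B :: "('m::finite, 'n::finite) bimat"
  shows "product_values B \<subseteq> W1i B"
proof
  fix c assume "c \<in> product_values B"
  then obtain v w where vw: "norm v = 1" "norm w = 1"
    and c: "c = tensor_vec v w \<bullet> (B *v tensor_vec v w)"
    unfolding product_values_def by blast
  define t where "t = tensor_vec v w"
  define x where "x = ((\<chi> p. complex_of_real (t $ p)) :: complex ^ _)"
  have nx: "norm x = 1" unfolding x_def norm_cvec t_def norm_tensor using vw by simp
  have c1: "c = (\<Sum>p\<in>UNIV. \<Sum>q\<in>UNIV. t $ p * B $ p $ q * t $ q)"
    unfolding c t_def by (rule quad_form)
  have c2: "c = (\<Sum>p\<in>UNIV. \<Sum>q\<in>UNIV. t $ p * partial_transpose B $ p $ q * t $ q)"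
    unfolding c1 t_def by (rule pt_same[symmetric])
  let ?A = "(\<chi> p q. complex_of_real (B $ p $ q)
                             + \<i> * complex_of_real (partial_transpose B $ p $ q)) :: complex ^ _ ^ _"
  have "(\<Sum>p\<in>UNIV. \<Sum>q\<in>UNIV. cnj (x $ p) * ?A $ p $ q * x $ q)
     = (\<Sum>p\<in>UNIV. \<Sum>q\<in>UNIV. complex_of_real (t $ p * B $ p $ q * t $ q)
          + \<i> * complex_of_real (t $ p * partial_transpose B $ p $ q * t $ q))"
  proof (intro sum.cong refl)
    fix p q
    show "cnj (x $ p) * ?A $ p $ q * x $ q = complex_of_real (t $ p * B $ p $ q * t $ q)
          + \<i> * complex_of_real (t $ p * partial_transpose B $ p $ q * t $ q)"
      unfolding x_def by (simp add: algebra_simps)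
  qed
  also have "\<dots> = complex_of_real (\<Sum>p\<in>UNIV. \<Sum>q\<in>UNIV. t $ p * B $ p $ q * t $ q)
      + \<i> * complex_of_real (\<Sum>p\<in>UNIV. \<Sum>q\<in>UNIV. t $ p * partial_transpose B $ p $ q * t $ q)"
    by (simp only: sum.distrib of_real_sum sum_distrib_left)
  also have "\<dots> = complex_of_real c * (1 + \<i>)"
    unfolding c1[symmetric] c2[symmetric] by (simp add: algebra_simps)
  finally show "c \<in> W1i B"
    unfolding W1i_def numerical_range_def using nx by force
qed

lemma W1i_bounded:
  fixes B :: "('m::finite, 'n::finite) bimat"
  assumes "c \<in> W1i B"
  shows "\<exists>K. \<bar>c\<bar> \<le> K \<and> K = (\<Sum>p\<in>UNIV. \<Sum>q\<in>UNIV. norm (((\<chi> p q. complex_of_real (B $ p $ q)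
       + \<i> * complex_of_real (partial_transpose B $ p $ q)) :: complex ^ ('m\<times>'n) ^ ('m\<times>'n)) $ p $ q))"
proof -
  define A where "A = ((\<chi> p q. complex_of_real (B $ p $ q)
                             + \<i> * complex_of_real (partial_transpose B $ p $ q)) :: complex ^ ('m\<times>'n) ^ ('m\<times>'n))"
  obtain x :: "complex ^ ('m\<times>'n)" where nx: "norm x = 1"
    and z: "complex_of_real c * (1 + \<i>) = (\<Sum>p\<in>UNIV. \<Sum>q\<in>UNIV. cnj (x $ p) * A $ p $ q * x $ q)"
    using assms unfolding W1i_def numerical_range_def A_def by blast
  have "\<bar>c\<bar> \<le> norm (complex_of_real c * (1 + \<i>))"
  proof -
    have "norm (1 + \<i>) \<ge> 1" by (simp add: cmod_def)
    then have "\<bar>c\<bar> * 1 \<le> \<bar>c\<bar> * norm (1 + \<i>)" by (intro mult_left_mono) auto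
    then show ?thesis by (simp add: norm_mult)
  qed
  also have "\<dots> \<le> (\<Sum>p\<in>UNIV. \<Sum>q\<in>UNIV. norm (cnj (x $ p) * A $ p $ q * x $ q))"
    unfolding z by (rule order_trans[OF norm_sum sum_mono[OF norm_sum]])
  also have "\<dots> \<le> (\<Sum>p\<in>UNIV. \<Sum>q\<in>UNIV. norm (A $ p $ q))"
  proof (intro sum_mono)
    fix p q
    have h: "norm (x $ p) \<le> 1" "norm (x $ q) \<le> 1"
      using Finite_Cartesian_Product.norm_nth_le[of x] nx by metis+
    have "norm (cnj (x $ p) * A $ p $ q * x $ q) = norm (x $ p) * norm (A $ p $ q) * norm (x $ q)"
      by (simp add: norm_mult)
    also have "\<dots> \<le> 1 * norm (A $ p $ q) * 1"
      using h by (intro mult_mono) auto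
    finally show "norm (cnj (x $ p) * A $ p $ q * x $ q) \<le> norm (A $ p $ q)" by simp
  qed
  finally show ?thesis unfolding A_def by blast
qed

theorem theorem3p1:
  fixes B :: "('m::finite, 'n::finite) bimat"
  shows "mu_min B \<ge> W1i_min B \<and> mu_max B \<le> W1i_max B"
proof -
  have ne: "product_values B \<noteq> {}"
  proof -
    have "norm (axis (undefined::'m) (1::real)) = 1" "norm (axis (undefined::'n) (1::real)) = 1"
      by simp_all
    then show ?thesis unfolding product_values_def by blast
  qed
  obtain K where K: "\<And>c. c \<in> W1i B \<Longrightarrow> \<bar>c\<bar> \<le> K"
    using W1i_bounded by meson
  have bb: "bdd_below (W1i B)" unfolding bdd_below_def
    by (rule exI[of _ "-K"]) (auto dest!: K)
  have ba: "bdd_above (W1i B)" unfolding bdd_above_def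
    by (rule exI[of _ K]) (auto dest!: K)
  show ?thesis
    unfolding mu_min_def mu_max_def W1i_min_def W1i_max_def
    using cInf_superset_mono[OF ne bb prod_sub] cSup_subset_mono[OF ne ba prod_sub] by simp
qed
end
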